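(* Let $N\ge1$ and let $P_N$ be as in the context. For $t\in(0,\pi)$ with $t\ne\frac{2\pi}{N+2}$, $$\operatorname{Im}P_N(e^{it})=\frac{1-\cos\frac{2\pi}{N+2}}{(N+2)(1-\cos t)}\cdot\frac{\sin t\,\bigl(\sin\frac{(N+2)t}{2}\bigr)^2}{\bigl(\cos t-\cos\frac{2\pi}{N+2}\bigr)^2}.$$ In particular $\operatorname{Im}P_N(e^{it})\ge0$ for all $t\in[0,\pi]$, and $P_N$ (which has real coefficients) is typically real in the unit disc $\mathbb D=\{|z|<1\}$, i.e. $\operatorname{Im}P_N(z)\cdot\operatorname{Im}z\ge0$ for $z\in\mathbb D$.
   Context: For an integer $N\ge1$ put, for $k=1,\dots,N$, $$b_k=\frac{(N-k+3)\sin\frac{(k+1)\pi}{N+2}-(N-k+1)\sin\frac{(k-1)\pi}{N+2}}{(N+2)\sin\frac{\pi}{N+2}},$$ and define $P_N(z)=\frac{1}{\sin\frac{2\pi}{N+2}}\sum_{k=1}^N b_k\sin\frac{k\pi}{N+2}\,z^k$. *)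

theory Defs
  imports "HOL-Analysis.Analysis"
begin

definition b_coef :: "nat \<Rightarrow> nat \<Rightarrow> real" where
  "b_coef N k =
    ((real N - real k + 3) * sin ((real k + 1) * pi / (real N + 2))
      - (real N - real k + 1) * sin ((real k - 1) * pi / (real N + 2)))
    / ((real N + 2) * sin (pi / (real N + 2)))"

definition P_poly :: "nat \<Rightarrow> complex \<Rightarrow> complex" where
  "P_poly N z = complex_of_real (1 / sin (2 * pi / (real N + 2))) *
     (\<Sum>k=1..N. complex_of_real (b_coef N k * sin (real k * pi / (real N + 2))) * z ^ k)"

end

theory Submission imports Defs "HOL-Complex_Analysis.Complex_Analysis" begin

lemma cos_sum: "(1 - cos th) * (\<Sum>k<n. cos (real k * th)) = ((1 - cos th) + cos (real n * th - th) - cos (real n * th)) / 2"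
proof (induction n)
  case 0 show ?case by simp
next
  case (Suc n)
  have "(1 - cos th) * (\<Sum>k<Suc n. cos (real k * th)) = (1 - cos th) * (\<Sum>k<n. cos (real k * th)) + (1 - cos th) * cos (real n * th)"
    by (simp add: algebra_simps)
  also have "\<dots> = ((1 - cos th) + cos (real n * th - th) - cos (real n * th)) / 2 + (1 - cos th) * cos (real n * th)"
    using Suc.IH by simp
  also have "\<dots> = ((1 - cos th) + cos (real (Suc n) * th - th) - cos (real (Suc n) * th)) / 2"
    by (simp add: distrib_right cos_add cos_diff field_simps)
  finally show ?case .
qed

lemma sin_sum: "2 * (1 - cos th) * (\<Sum>k<n. sin (real k * th)) = sin (real n * th - th) - sin (real n * th) + sin th"
proof (induction n)
  case 0 show ?case by simp
next
  case (Suc n)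
  have "2 * (1 - cos th) * (\<Sum>k<Suc n. sin (real k * th)) = 2 * (1 - cos th) * (\<Sum>k<n. sin (real k * th)) + 2 * (1 - cos th) * sin (real n * th)"
    by (simp add: algebra_simps)
  also have "\<dots> = sin (real n * th - th) - sin (real n * th) + sin th + 2 * (1 - cos th) * sin (real n * th)"
    using Suc.IH by simp
  also have "\<dots> = sin (real (Suc n) * th - th) - sin (real (Suc n) * th) + sin th"
    by (simp add: distrib_right sin_add sin_diff algebra_simps)
  finally show ?case .
qed

lemma fejer: "(1 - cos th) * (\<Sum>k<n. (real n - real k) * cos (real k * th)) = (real n * (1 - cos th) + 1 - cos (real n * th)) / 2"
proof (induction n)
  case 0 show ?case by simp
next
  case (Suc n)
  have "(\<Sum>k<Suc n. (real (Suc n) - real k) * cos (real k * th)) = (\<Sum>k<Suc n. (real n - real k) * cos (real k * th)) + (\<Sum>k<Suc n. cos (real k * th))"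
    by (simp add: sum.distrib[symmetric] algebra_simps)
  also have "(\<Sum>k<Suc n. (real n - real k) * cos (real k * th)) = (\<Sum>k<n. (real n - real k) * cos (real k * th))"
    by simp
  finally have e: "(\<Sum>k<Suc n. (real (Suc n) - real k) * cos (real k * th)) = (\<Sum>k<n. (real n - real k) * cos (real k * th)) + (\<Sum>k<Suc n. cos (real k * th))" .
  have "(1 - cos th) * (\<Sum>k<Suc n. (real (Suc n) - real k) * cos (real k * th))
     = (1 - cos th) * (\<Sum>k<n. (real n - real k) * cos (real k * th)) + (1 - cos th) * (\<Sum>k<Suc n. cos (real k * th))"
    unfolding e by (simp add: distrib_left)
  also have "\<dots> = (real n * (1 - cos th) + 1 - cos (real n * th)) / 2 + ((1 - cos th) + cos (real (Suc n) * th - th) - cos (real (Suc n) * th)) / 2"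
    unfolding Suc.IH cos_sum ..
  also have "\<dots> = (real (Suc n) * (1 - cos th) + 1 - cos (real (Suc n) * th)) / 2"
    by (simp add: field_simps)
  finally show ?case .
qed
lemma alg:
  fixes ct st cx sx cM sM m F1 F2 S0 S1 S2 :: real
  assumes t1: "ct^2 + st^2 = 1" and x1: "cx^2 + sx^2 = 1"
    and hF1: "2 * (1 - (ct * cx + st * sx)) * F1 = m  *  (1 - (ct * cx + st * sx)) + 1 - cM"
    and hF2: "2 * (1 - (ct * cx - st * sx)) * F2 = m  *  (1 - (ct * cx - st * sx)) + 1 - cM"
    and hS0: "2 * (1-ct) * S0 = sM * ct - cM * st - sM + st"
    and hS1: "2 * (1 - (ct * cx - st * sx)) * S1 = (sM * ct - cM * st) * cx - (cM * ct + sM * st) * sx - sM + (st * cx + ct * sx)"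
    and hS2: "2 * (1 - (ct * cx + st * sx)) * S2 = (sM * ct - cM * st) * cx + (cM * ct + sM * st) * sx - sM + (st * cx - ct * sx)"
  shows "2 * (1-ct) * (1 - (ct * cx + st * sx)) * (1 - (ct * cx - st * sx)) * sx * (F1-F2)
     + 4 * (1+cx) * (1-ct) * (1 - (ct * cx + st * sx)) * (1 - (ct * cx - st * sx)) * S0
     - 2 * (1+cx) * (1-ct) * (1 - (ct * cx + st * sx)) * (1 - (ct * cx - st * sx)) * (S1+S2)
     = 2 * sx^2 * (1-cx) * st * (1-cM)"
  using assms by algebra

lemma fin_alg:
  fixes sx cx st cM d0 D m :: real
  assumes "sx \<noteq> 0" "d0 \<noteq> 0" "D \<noteq> 0" "m \<noteq> 0"
  shows "2 * sx^2 * (1 - cx) * st * (1 - cM) / (4 * d0 * D * sx) / (m * sx)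
    = (1 - cx) / (m * d0) * (st * ((1 - cM) / 2) / D)"
  using assms by (simp add: field_simps power2_eq_square)

lemma part1:
  fixes N :: nat and t :: real
  assumes N: "N \<ge> 1" and t0: "0 < t" and tpi: "t < pi" and tx: "t \<noteq> 2 * pi / (real N + 2)"
  shows "Im (P_poly N (cis t)) =
              (1 - cos (2 * pi / (real N + 2))) / ((real N + 2) * (1 - cos t)) *
              (sin t * (sin ((real N + 2) * t / 2))^2 / (cos t - cos (2 * pi / (real N + 2)))^2)"
proof -
  define m where "m = real N + 2"
  define a where "a = pi / m"
  define x where "x = 2*pi/m"
  have m3: "m \<ge> 3" using N by (simp add: m_def)
  have xa: "x = 2*a" by (simp add: x_def a_def)
  have mx: "m * x = 2*pi" using m3 by (simp add: x_def)
  have a0: "0 < a" using m3 by (simp add: a_def)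
  have a3: "a \<le> pi/3" unfolding a_def using m3 by (intro divide_left_mono) auto
  have sa: "sin a > 0" using a0 a3 by (intro sin_gt_zero) auto
  have ca: "cos a > 0" using a0 a3 by (intro cos_gt_zero) auto
  have sx: "sin x > 0" using a0 a3 xa by (intro sin_gt_zero) auto
  have xpi: "x < pi" using a3 a0 xa pi_gt_zero by linarith
  define K where "K = (1 + cos x) / sin x"
  define c where "c k = (m - real k) * sin (real k * x) + (1 - cos (real k * x)) * K" for k :: nat
  have bc: "b_coef N k * sin (real k * pi / (real N + 2)) = c k / m" for k
  proof -
    define u where "u = real k * a"
    have e1: "(real k + 1) * pi / m = u + a" using m3 by (simp add: u_def a_def field_simps)
    have e2: "(real k - 1) * pi / m = u - a" using m3 by (simp add: u_def a_def field_simps)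
    have e3: "real k * pi / m = u" using m3 by (simp add: u_def a_def field_simps)
    have e4: "real k * x = 2 * u" by (simp add: u_def xa)
    have e5: "real N - real k + 3 = m - real k + 1" "real N - real k + 1 = m - real k - 1" "real N + 2 = m"
      by (simp_all add: m_def)
    have "b_coef N k * sin (real k * pi / (real N + 2)) = 
      ((m - real k + 1) * sin ((real k + 1) * pi / m) - (m - real k - 1) * sin ((real k - 1) * pi / m)) / (m * sin (pi / m)) * sin (real k * pi / m)"
      unfolding b_coef_def e5 ..
    also have "\<dots> = ((m - real k + 1) * sin (u + a) - (m - real k - 1) * sin (u - a)) / (m * sin a) * sin u"
      unfolding e1 e2 e3 a_def ..
    also have "\<dots> = c k / m"
      unfolding c_def K_def e4 unfolding xa sin_double cos_double sin_add sin_diff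
      using sa ca m3 apply (simp add: field_simps)
      using sin_cos_squared_add[of u] sin_cos_squared_add[of a] by algebra
    finally show ?thesis .
  qed
  have imP: "Im (P_poly N (cis t)) = (1 / sin x) * (\<Sum>k=1..N. b_coef N k * sin (real k * pi / (real N + 2)) * sin (real k * t))"
  proof -
    have ic: "Im (cis t ^ k) = sin (real k * t)" for k by (simp only: Complex.DeMoivre) simp
    show ?thesis unfolding P_poly_def x_def m_def by (simp add: Im_sum ic)
  qed
  have ext: "(\<Sum>k=1..N. c k * sin (real k * t)) = (\<Sum>k<N+2. c k * sin (real k * t))"
  proof -
    have cN: "c (Suc N) = 0"
    proof -
      have r: "real (Suc N) * x = 2 * pi - x" using mx by (simp add: m_def algebra_simps)
      have r2: "m - real (Suc N) = 1" by (simp add: m_def)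
      show ?thesis unfolding c_def r r2 K_def using sx
        by (simp add: sin_diff cos_diff field_simps)
    qed
    have "(\<Sum>k<N+2. c k * sin (real k * t)) = (\<Sum>k<Suc N. c k * sin (real k * t)) + c (Suc N) * sin (real (Suc N) * t)"
      by simp
    also have "(\<Sum>k<Suc N. c k * sin (real k * t)) = (\<Sum>k\<in>{0..N}. c k * sin (real k * t))"
      by (simp add: lessThan_Suc_atMost atLeast0AtMost)
    also have "\<dots> = c 0 * sin (real 0 * t) + (\<Sum>k\<in>{Suc 0..N}. c k * sin (real k * t))"
      by (rule sum.atLeast_Suc_atMost) simp
    finally show ?thesis using cN by simp
  qed
  define F1 where "F1 = (\<Sum>k<N+2. (real (N+2) - real k) * cos (real k * (t - x)))"
  define F2 where "F2 = (\<Sum>k<N+2. (real (N+2) - real k) * cos (real k * (t + x)))"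
  define S0 where "S0 = (\<Sum>k<N+2. sin (real k * t))"
  define S1 where "S1 = (\<Sum>k<N+2. sin (real k * (t + x)))"
  define S2 where "S2 = (\<Sum>k<N+2. sin (real k * (t - x)))"
  have dec: "(\<Sum>k<N+2. c k * sin (real k * t)) = (F1 - F2)/2 + K * (S0 - (S1 + S2)/2)"
  proof -
    have rm: "real (N+2) = m" by (simp add: m_def)
    have trm: "c k * sin (real k * t) = ((real (N+2) - real k) * cos (real k * (t - x)) - (real (N+2) - real k) * cos (real k * (t + x)))/2
       + K * (sin (real k * t) - (sin (real k * (t + x)) + sin (real k * (t - x)))/2)" for k
      unfolding c_def rm right_diff_distrib distrib_left sin_add sin_diff cos_add cos_diff
      by (simp add: field_simps)
    have "(\<Sum>k<N+2. c k * sin (real k * t)) = (\<Sum>k<N+2. ((real (N+2) - real k) * cos (real k * (t - x)) - (real (N+2) - real k) * cos (real k * (t + x)))/2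
       + K * (sin (real k * t) - (sin (real k * (t + x)) + sin (real k * (t - x)))/2))"
      by (rule sum.cong) (simp_all only: trm)
    also have "\<dots> = (F1 - F2)/2 + K * (S0 - (S1 + S2)/2)"
      unfolding F1_def F2_def S0_def S1_def S2_def
      by (simp only: sum.distrib sum_subtractf sum_divide_distrib[symmetric] sum_distrib_left[symmetric])
    finally show ?thesis .
  qed
  have key: "2 * (1-cos t) * (1 - (cos t * cos x + sin t * sin x)) * (1 - (cos t * cos x - sin t * sin x)) * sin x * (F1-F2)
     + 4 * (1+cos x) * (1-cos t) * (1 - (cos t * cos x + sin t * sin x)) * (1 - (cos t * cos x - sin t * sin x)) * S0
     - 2 * (1+cos x) * (1-cos t) * (1 - (cos t * cos x + sin t * sin x)) * (1 - (cos t * cos x - sin t * sin x)) * (S1+S2)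
     = 2 * (sin x)^2 * (1-cos x) * sin t * (1-cos (m * t))"
  proof -
    have M1: "real (N+2) * (t - x) = m * t - 2 * pi" using mx by (simp add: m_def algebra_simps)
    have M2: "real (N+2) * (t + x) = m * t + 2 * pi" using mx by (simp add: m_def algebra_simps)
    have M0: "real (N+2) * t = m * t" by (simp add: m_def)
    have hF1: "2 * (1 - (cos t * cos x + sin t * sin x)) * F1 = real (N+2) * (1 - (cos t * cos x + sin t * sin x)) + 1 - cos (m * t)"
      using fejer[of "t - x" "N+2"] unfolding F1_def[symmetric] M1 by (simp add: cos_diff field_simps)
    have hF2: "2 * (1 - (cos t * cos x - sin t * sin x)) * F2 = real (N+2) * (1 - (cos t * cos x - sin t * sin x)) + 1 - cos (m * t)"
      using fejer[of "t + x" "N+2"] unfolding F2_def[symmetric] M2 by (simp add: cos_add field_simps)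
    have hS0: "2 * (1 - cos t) * S0 = sin (m * t) * cos t - cos (m * t) * sin t - sin (m * t) + sin t"
      using sin_sum[of t "N+2"] unfolding S0_def[symmetric] M0 by (simp add: sin_diff)
    have hS1: "2 * (1 - (cos t * cos x - sin t * sin x)) * S1 = (sin (m * t) * cos t - cos (m * t) * sin t) * cos x - (cos (m * t) * cos t + sin (m * t) * sin t) * sin x - sin (m * t) + (sin t * cos x + cos t * sin x)"
      using sin_sum[of "t + x" "N+2"] unfolding S1_def[symmetric] M2 
      by (simp add: sin_add sin_diff cos_add cos_diff algebra_simps)
    have hS2: "2 * (1 - (cos t * cos x + sin t * sin x)) * S2 = (sin (m * t) * cos t - cos (m * t) * sin t) * cos x + (cos (m * t) * cos t + sin (m * t) * sin t) * sin x - sin (m * t) + (sin t * cos x - cos t * sin x)"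
      using sin_sum[of "t - x" "N+2"] unfolding S2_def[symmetric] M1 
      by (simp add: sin_add sin_diff cos_add cos_diff algebra_simps)
    show ?thesis by (rule alg[OF sin_cos_squared_add2[of t] sin_cos_squared_add2[of x] hF1 hF2 hS0 hS1 hS2])
  qed
  define T where "T = (F1 - F2)/2 + K * (S0 - (S1 + S2)/2)"
  have imT: "Im (P_poly N (cis t)) = T / (m * sin x)"
  proof -
    have "(\<Sum>k=1..N. b_coef N k * sin (real k * pi / (real N + 2)) * sin (real k * t)) = (\<Sum>k=1..N. c k * sin (real k * t)) / m"
      unfolding sum_divide_distrib by (rule sum.cong) (simp_all add: bc)
    then show ?thesis unfolding imP ext dec T_def[symmetric] by simp
  qed
  define d0 where "d0 = 1 - cos t"
  define d1 where "d1 = 1 - (cos t * cos x + sin t * sin x)"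
  define d2 where "d2 = 1 - (cos t * cos x - sin t * sin x)"
  have d12: "d1 * d2 = (cos t - cos x)^2" unfolding d1_def d2_def
    using sin_cos_squared_add2[of t] sin_cos_squared_add2[of x] by algebra
  have d0p: "d0 > 0" unfolding d0_def using cos_monotone_0_pi[of 0 t] t0 tpi by simp
  have cne: "cos t \<noteq> cos x"
  proof
    assume "cos t = cos x"
    moreover have "0 \<le> x" using a0 xa by simp
    ultimately have "t = x" using cos_inj_pi[of t x] t0 tpi xpi by simp
    then show False using tx unfolding x_def m_def by simp
  qed
  have key2: "T * (4 * d0 * d1 * d2 * sin x) = 2 * (sin x)^2 * (1 - cos x) * sin t * (1 - cos (m * t))"
  proof -
    have "T * (4 * d0 * d1 * d2 * sin x) = 2*d0*d1*d2* sin x*(F1-F2) + 4*(1+cos x)*d0*d1*d2*S0 - 2*(1+cos x)*d0*d1*d2*(S1+S2)"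
    proof -
      have Ks: "K * sin x = 1 + cos x" unfolding K_def using sx by simp
      have "T * (4 * d0 * d1 * d2 * sin x) = 2*d0*d1*d2* sin x*(F1-F2) + 4*(K * sin x)*d0*d1*d2*S0 - 2*(K * sin x)*d0*d1*d2*(S1+S2)"
        unfolding T_def by (simp add: field_simps)
      then show ?thesis unfolding Ks .
    qed
    also have "\<dots> = 2 * (sin x)^2 * (1 - cos x) * sin t * (1 - cos (m * t))"
      unfolding d0_def d1_def d2_def by (rule key)
    finally show ?thesis .
  qed
  have e4: "4 * d0 * d1 * d2 * sin x = 4 * d0 * (cos t - cos x)^2 * sin x"
  proof -
    have "4 * d0 * d1 * d2 * sin x = 4 * d0 * (d1 * d2) * sin x" by (simp only: mult.assoc)
    then show ?thesis by (simp only: d12)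
  qed
  have nz: "4 * d0 * (cos t - cos x)^2 * sin x \<noteq> 0" using d0p cne sx by simp
  have T_eq: "T = 2 * (sin x)^2 * (1 - cos x) * sin t * (1 - cos (m * t)) / (4 * d0 * (cos t - cos x)^2 * sin x)"
  proof -
    have k3: "T * (4 * d0 * (cos t - cos x)^2 * sin x) = 2 * (sin x)^2 * (1 - cos x) * sin t * (1 - cos (m * t))"
      using key2 unfolding e4 .
    show ?thesis using k3 nz by (simp add: eq_divide_eq)
  qed
  have sM2: "(sin (m * t / 2))^2 = (1 - cos (m * t)) / 2" using cos_double_sin[of "m * t / 2"] by simp
  have goal: "Im (P_poly N (cis t)) = (1 - cos x) / (m * d0) * (sin t * (sin (m * t / 2))^2 / (cos t - cos x)^2)"
    unfolding imT T_eq sM2 using sx m3 d0p cne by (intro fin_alg) auto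
  show ?thesis using goal unfolding m_def x_def d0_def by simp
qed

lemma P_real: "Im (P_poly N (complex_of_real r)) = 0"
proof -
  have "P_poly N (complex_of_real r) = complex_of_real (1 / sin (2 * pi / (real N + 2)) * (\<Sum>k=1..N. b_coef N k * sin (real k * pi / (real N + 2)) * r ^ k))"
    unfolding P_poly_def by simp
  then show ?thesis by simp
qed

lemma P_cnj: "P_poly N (cnj z) = cnj (P_poly N z)"
  unfolding P_poly_def by simp

lemma P_cont: "continuous_on UNIV (\<lambda>t. Im (P_poly N (cis t)))"
  unfolding P_poly_def by (intro continuous_intros)

lemma part2:
  fixes N :: nat and t :: real
  assumes N: "N \<ge> 1" and t0: "0 \<le> t" and tpi: "t \<le> pi"
  shows "Im (P_poly N (cis t)) \<ge> 0"
proof -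
  define f where "f = (\<lambda>t. Im (P_poly N (cis t)))"
  define x where "x = 2 * pi / (real N + 2)"
  have x0: "0 < x" unfolding x_def by simp
  have "x \<le> 2 * pi / 3" unfolding x_def using N by (intro divide_left_mono) auto
  then have xpi: "x < pi" using pi_gt_zero by linarith
  have gen: "f s \<ge> 0" if s: "0 < s" "s < pi" "s \<noteq> x" for s
  proof -
    have c1: "cos s < 1" using cos_monotone_0_pi[of 0 s] s by simp
    have ss: "sin s > 0" using s by (intro sin_gt_zero) auto
    have cx: "1 - cos x \<ge> 0" by simp
    show ?thesis unfolding f_def part1[OF N s(1) s(2) s(3)[unfolded x_def]]
      using c1 ss cx by (intro mult_nonneg_nonneg divide_nonneg_nonneg divide_nonneg_pos) (auto simp: x_def)
  qed
  have at_x: "f x \<ge> 0"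
  proof (rule tendsto_lowerbound)
    show "(f \<longlongrightarrow> f x) (at x)"
      using P_cont[of N] unfolding f_def by (auto simp: continuous_on_eq_continuous_at isCont_def)
    show "\<not> trivial_limit (at x)" by simp
    show "\<forall>\<^sub>F i in at x. 0 \<le> f i"
      unfolding eventually_at
    proof (intro exI[of _ "min x (pi - x)"] conjI ballI impI)
      show "0 < min x (pi - x)" using x0 xpi by simp
      fix s assume "s \<in> UNIV" "s \<noteq> x \<and> dist s x < min x (pi - x)"
      then have "0 < s" "s < pi" "s \<noteq> x" by (auto simp: dist_real_def)
      then show "0 \<le> f s" by (rule gen)
    qed
  qed
  show ?thesis
  proof (cases "t = 0 \<or> t = pi \<or> t = x")
    case True
    then show ?thesis
    proof (elim disjE)
      assume "t = 0" then show ?thesis using P_real[of N 1] by simp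
    next
      assume "t = pi" then show ?thesis using P_real[of N "-1"] by simp
    next
      assume "t = x" then show ?thesis using at_x unfolding f_def by simp
    qed
  next
    case False
    then show ?thesis using gen[of t] t0 tpi unfolding f_def by auto
  qed
qed

lemma part3_upper:
  fixes N :: nat and z :: complex
  assumes N: "N \<ge> 1" and z1: "norm z < 1" and zi: "Im z > 0"
  shows "Im (P_poly N z) \<ge> 0"
proof -
  define S where "S = {z::complex. norm z < 1 \<and> 0 < Im z}"
  define C where "C = {z::complex. norm z \<le> 1 \<and> 0 \<le> Im z}"
  have oS: "open S" unfolding S_def
    by (intro open_Collect_conj open_Collect_less continuous_intros)
  have cC: "closed C" unfolding C_def
    by (intro closed_Collect_conj closed_Collect_le continuous_intros)
  have SC: "S \<subseteq> C" unfolding S_def C_def by auto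
  have clS: "closure S \<subseteq> C" using closure_minimal[OF SC cC] .
  have fr: "frontier S \<subseteq> C - S" unfolding frontier_def interior_open[OF oS] using clS by auto
  have "- Im (P_poly N z) \<le> 0"
  proof -
    have "Re ((\<lambda>w. \<i> * P_poly N w) z) \<le> 0"
    proof (rule maximum_real_frontier[where S = S and f = "\<lambda>w. \<i> * P_poly N w"])
      show "(\<lambda>w. \<i> * P_poly N w) holomorphic_on interior S"
        unfolding P_poly_def by (intro holomorphic_intros)
      show "continuous_on (closure S) (\<lambda>w. \<i> * P_poly N w)"
        unfolding P_poly_def by (intro continuous_intros)
      show "bounded S" unfolding S_def by (rule bounded_subset[OF bounded_ball[of 0 1]]) auto
      show "z \<in> S" unfolding S_def using z1 zi by simp
      fix w assume "w \<in> frontier S"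
      then have w: "norm w \<le> 1" "0 \<le> Im w" "\<not> (norm w < 1 \<and> 0 < Im w)"
        using fr unfolding C_def S_def by auto
      have "Im (P_poly N w) \<ge> 0"
      proof (cases "Im w = 0")
        case True
        then have "w = complex_of_real (Re w)" by (simp add: complex_eq_iff)
        then show ?thesis using P_real[of N "Re w"] by simp
      next
        case False
        then have nw: "norm w = 1" using w by auto
        then have rw: "(Re w)^2 + (Im w)^2 = 1" unfolding cmod_def
          using real_sqrt_eq_1_iff by simp
        then have "(Re w)^2 \<le> 1" using zero_le_power2[of "Im w"] by linarith
        then have "\<bar>Re w\<bar> \<le> 1" by (simp add: abs_square_le_1)
        then have rb: "-1 \<le> Re w" "Re w \<le> 1" by auto
        define s where "s = arccos (Re w)"
        have s0: "0 \<le> s" "s \<le> pi" unfolding s_def using rb by (auto intro: arccos_lbound arccos_ubound)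
        have cs: "cos s = Re w" unfolding s_def using rb by simp
        have "sin s = sqrt (1 - (Re w)^2)" unfolding s_def using rb by (simp add: sin_arccos)
        also have "\<dots> = Im w" using rw w(2) by (simp add: real_sqrt_unique)
        finally have "cis s = w" using cs by (simp add: complex_eq_iff)
        then show ?thesis using part2[OF N s0] by simp
      qed
      then show "Re (\<i> * P_poly N w) \<le> 0" by simp
    qed
    then show ?thesis by simp
  qed
  then show ?thesis by simp
qed

lemma part3:
  fixes N :: nat and z :: complex
  assumes N: "N \<ge> 1" and z1: "norm z < 1"
  shows "Im (P_poly N z) * Im z \<ge> 0"
proof (cases "Im z > 0")
  case True then show ?thesis using part3_upper[OF N z1] by simp
next
  case False
  show ?thesis
  proof (cases "Im z = 0")
    case True then show ?thesis by simp
  next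
    case False2: False
    then have "Im (cnj z) > 0" using False by simp
    then have "Im (P_poly N (cnj z)) \<ge> 0" using part3_upper[OF N] z1 by simp
    then have "Im (P_poly N z) \<le> 0" unfolding P_cnj by simp
    moreover have "Im z < 0" using False False2 by simp
    ultimately show ?thesis by (simp add: mult_nonpos_nonpos)
  qed
qed

theorem mainTheorem3:
  fixes N :: nat
  assumes "N \<ge> 1"
  shows "(\<forall>t::real. 0 < t \<and> t < pi \<and> t \<noteq> 2 * pi / (real N + 2) \<longrightarrow>
            Im (P_poly N (cis t)) =
              (1 - cos (2 * pi / (real N + 2))) / ((real N + 2) * (1 - cos t)) *
              (sin t * (sin ((real N + 2) * t / 2))^2 / (cos t - cos (2 * pi / (real N + 2)))^2))
       \<and> (\<forall>t::real. 0 \<le> t \<and> t \<le> pi \<longrightarrow> Im (P_poly N (cis t)) \<ge> 0)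
       \<and> (\<forall>z::complex. norm z < 1 \<longrightarrow> Im (P_poly N z) * Im z \<ge> 0)"
  using part1[OF assms] part2[OF assms] part3[OF assms] by blast

end
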